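(* If $G$ is a connected graph with girth at least $5$ and maximum degree $\Delta$, then $\chi_{D\ell}(G)\le\Delta+2$; that is, for every assignment of lists $L(v)$ of colors with $|L(v)|\ge\Delta+2$ for all $v\in V(G)$, there is a proper distinguishing coloring $\varphi$ of $G$ with $\varphi(v)\in L(v)$ for all $v$.
   Context: A coloring $\varphi$ of $G$ is proper if adjacent vertices get different colors, and distinguishing if the only automorphism $f$ of $G$ with $\varphi(f(v))=\varphi(v)$ for all $v$ is the identity. The distinguishing list chromatic number $\chi_{D\ell}(G)$ is the smallest $k$ such that for every list assignment $L$ with $|L(v)|\ge k$ for all $v$, there exists a proper distinguishing coloring $\varphi$ with $\varphi(v)\in L(v)$ for all $v$. *)

theory Defs
  imports Main
begin

definition graph :: "'a set \<Rightarrow> ('a \<Rightarrow> 'a \<Rightarrow> bool) \<Rightarrow> bool" where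
  "graph V E \<longleftrightarrow> finite V \<and> (\<forall>u v. E u v \<longrightarrow> u \<in> V \<and> v \<in> V)
     \<and> (\<forall>u v. E u v \<longrightarrow> E v u) \<and> (\<forall>v. \<not> E v v)"

definition connected_graph :: "'a set \<Rightarrow> ('a \<Rightarrow> 'a \<Rightarrow> bool) \<Rightarrow> bool" where
  "connected_graph V E \<longleftrightarrow> V \<noteq> {} \<and> (\<forall>u\<in>V. \<forall>v\<in>V. E\<^sup>*\<^sup>* u v)"

definition degree :: "('a \<Rightarrow> 'a \<Rightarrow> bool) \<Rightarrow> 'a \<Rightarrow> nat" where
  "degree E v = card {u. E v u}"

definition max_degree :: "'a set \<Rightarrow> ('a \<Rightarrow> 'a \<Rightarrow> bool) \<Rightarrow> nat" where
  "max_degree V E = Max (degree E ` V)"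

definition is_cycle :: "'a set \<Rightarrow> ('a \<Rightarrow> 'a \<Rightarrow> bool) \<Rightarrow> 'a list \<Rightarrow> bool" where
  "is_cycle V E cs \<longleftrightarrow> length cs \<ge> 3 \<and> distinct cs \<and> set cs \<subseteq> V
     \<and> (\<forall>i < length cs. E (cs ! i) (cs ! ((i + 1) mod length cs)))"

definition girth_at_least :: "'a set \<Rightarrow> ('a \<Rightarrow> 'a \<Rightarrow> bool) \<Rightarrow> nat \<Rightarrow> bool" where
  "girth_at_least V E k \<longleftrightarrow> (\<forall>cs. is_cycle V E cs \<longrightarrow> length cs \<ge> k)"

definition automorphism :: "'a set \<Rightarrow> ('a \<Rightarrow> 'a \<Rightarrow> bool) \<Rightarrow> ('a \<Rightarrow> 'a) \<Rightarrow> bool" where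
  "automorphism V E f \<longleftrightarrow> bij_betw f V V \<and> (\<forall>u\<in>V. \<forall>v\<in>V. E u v \<longleftrightarrow> E (f u) (f v))"

definition proper_coloring :: "'a set \<Rightarrow> ('a \<Rightarrow> 'a \<Rightarrow> bool) \<Rightarrow> ('a \<Rightarrow> 'c) \<Rightarrow> bool" where
  "proper_coloring V E \<phi> \<longleftrightarrow> (\<forall>u\<in>V. \<forall>v\<in>V. E u v \<longrightarrow> \<phi> u \<noteq> \<phi> v)"

definition distinguishing :: "'a set \<Rightarrow> ('a \<Rightarrow> 'a \<Rightarrow> bool) \<Rightarrow> ('a \<Rightarrow> 'c) \<Rightarrow> bool" where
  "distinguishing V E \<phi> \<longleftrightarrow>
     (\<forall>f. automorphism V E f \<and> (\<forall>v\<in>V. \<phi> (f v) = \<phi> v) \<longrightarrow> (\<forall>v\<in>V. f v = v))"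

end

theory Submission
  imports Defs
begin


lemma no_tri:
  assumes "girth_at_least V E 5" "a \<in> V" "b \<in> V" "c \<in> V"
    "E a b" "E b c" "E c a" "a \<noteq> b" "b \<noteq> c" "a \<noteq> c"
  shows False
proof -
  have "\<forall>i<length [a,b,c]. E ([a,b,c] ! i) ([a,b,c] ! ((i + 1) mod length [a,b,c]))"
  proof (intro allI impI)
    fix i assume "i < length [a,b,c]"
    then have "i = 0 \<or> i = 1 \<or> i = 2" by auto
    then show "E ([a,b,c] ! i) ([a,b,c] ! ((i + 1) mod length [a,b,c]))" using assms by auto
  qed
  then have "is_cycle V E [a,b,c]"
    unfolding is_cycle_def using assms by auto
  thus False using assms(1) unfolding girth_at_least_def by fastforce
qed

lemma no_sq:
  assumes "girth_at_least V E 5" "a \<in> V" "b \<in> V" "c \<in> V" "d \<in> V"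
    "E a b" "E b c" "E c d" "E d a" "distinct [a,b,c,d]"
  shows False
proof -
  have "\<forall>i<length [a,b,c,d]. E ([a,b,c,d] ! i) ([a,b,c,d] ! ((i + 1) mod length [a,b,c,d]))"
  proof (intro allI impI)
    fix i assume "i < length [a,b,c,d]"
    then have "i = 0 \<or> i = 1 \<or> i = 2 \<or> i = 3" by auto
    then show "E ([a,b,c,d] ! i) ([a,b,c,d] ! ((i + 1) mod length [a,b,c,d]))" using assms by auto
  qed
  then have "is_cycle V E [a,b,c,d]"
    unfolding is_cycle_def using assms by auto
  thus False using assms(1) unfolding girth_at_least_def by fastforce
qed

lemma greedy_aux:
  fixes H :: "'a \<Rightarrow> 'a \<Rightarrow> bool" and rk :: "'a \<Rightarrow> nat" and L :: "'a \<Rightarrow> 'c set"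
  assumes "finite V" "inj_on rk V"
    and B: "\<forall>v\<in>V. finite (L v) \<and> card {u\<in>V. H u v \<and> rk u < rk v} < card (L v)"
  shows "\<exists>\<phi>. (\<forall>v\<in>{v\<in>V. rk v < n}. \<phi> v \<in> L v) \<and>
     (\<forall>u\<in>{v\<in>V. rk v < n}. \<forall>v\<in>{v\<in>V. rk v < n}. H u v \<and> rk u < rk v \<longrightarrow> \<phi> u \<noteq> \<phi> v)"
proof (induction n)
  case 0
  then show ?case by auto
next
  case (Suc n)
  then obtain \<phi> where ph1: "\<forall>v\<in>{v\<in>V. rk v < n}. \<phi> v \<in> L v"
    and ph2: "\<forall>u\<in>{v\<in>V. rk v < n}. \<forall>v\<in>{v\<in>V. rk v < n}. H u v \<and> rk u < rk v \<longrightarrow> \<phi> u \<noteq> \<phi> v"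
    by blast
  show ?case
  proof (cases "\<exists>v\<in>V. rk v = n")
    case False
    then have eq: "{v\<in>V. rk v < Suc n} = {v\<in>V. rk v < n}" by (auto simp: less_Suc_eq)
    show ?thesis unfolding eq using ph1 ph2 by blast
  next
    case True
    then obtain w where w: "w \<in> V" "rk w = n" by blast
    let ?F = "{u\<in>V. H u w \<and> rk u < rk w}"
    have fin: "finite ?F" using assms(1) by auto
    have "card (\<phi> ` ?F) \<le> card ?F" using card_image_le fin by blast
    also have "\<dots> < card (L w)" using B w by blast
    finally have lt: "card (\<phi> ` ?F) < card (L w)" .
    have "\<not> L w \<subseteq> \<phi> ` ?F"
    proof
      assume "L w \<subseteq> \<phi> ` ?F"
      then have "card (L w) \<le> card (\<phi> ` ?F)" using card_mono[OF finite_imageI[OF fin]] by blast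
      then show False using lt by simp
    qed
    then obtain c where c: "c \<in> L w" "c \<notin> \<phi> ` ?F" by blast
    define \<psi> where "\<psi> = \<phi>(w := c)"
    have eqS: "{v\<in>V. rk v < Suc n} = insert w {v\<in>V. rk v < n}"
    proof -
      have uq: "v = w" if "v \<in> V" "rk v = n" for v
      proof -
        have "rk v = rk w" using that w by simp
        then show ?thesis using inj_onD[OF assms(2) _ that(1) w(1)] by simp
      qed
      show ?thesis
      proof
        show "{v\<in>V. rk v < Suc n} \<subseteq> insert w {v\<in>V. rk v < n}"
        proof
          fix x assume x: "x \<in> {v\<in>V. rk v < Suc n}"
          then have "x \<in> V" "rk x < n \<or> rk x = n" by auto
          then show "x \<in> insert w {v\<in>V. rk v < n}" using uq by blast
        qed
        show "insert w {v\<in>V. rk v < n} \<subseteq> {v\<in>V. rk v < Suc n}" using w by auto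
      qed
    qed
    have "\<forall>v\<in>{v\<in>V. rk v < Suc n}. \<psi> v \<in> L v"
      using ph1 c w eqS by (auto simp: \<psi>_def)
    moreover have "\<forall>u\<in>{v\<in>V. rk v < Suc n}. \<forall>v\<in>{v\<in>V. rk v < Suc n}. H u v \<and> rk u < rk v \<longrightarrow> \<psi> u \<noteq> \<psi> v"
    proof (intro ballI impI)
      fix u v assume u: "u \<in> {v\<in>V. rk v < Suc n}" and v: "v \<in> {v\<in>V. rk v < Suc n}"
        and h: "H u v \<and> rk u < rk v"
      show "\<psi> u \<noteq> \<psi> v"
      proof (cases "v = w")
        case True
        then have "u \<noteq> w" using h by auto
        then show ?thesis using True c h u by (auto simp: \<psi>_def)
      next
        case False
        then have "v \<in> {v\<in>V. rk v < n}" using v eqS by blast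
        then have "rk v < n" by simp
        then have "u \<noteq> w" "rk u < n" using h w by auto
        then show ?thesis using False ph2 u v h \<open>rk v < n\<close> by (auto simp: \<psi>_def)
      qed
    qed
    ultimately show ?thesis by blast
  qed
qed

lemma greedy:
  fixes H :: "'a \<Rightarrow> 'a \<Rightarrow> bool" and rk :: "'a \<Rightarrow> nat" and L :: "'a \<Rightarrow> 'c set"
  assumes "finite V" "inj_on rk V"
    and B: "\<forall>v\<in>V. finite (L v) \<and> card {u\<in>V. H u v \<and> rk u < rk v} < card (L v)"
  shows "\<exists>\<phi>. (\<forall>v\<in>V. \<phi> v \<in> L v) \<and> (\<forall>u\<in>V. \<forall>v\<in>V. H u v \<and> rk u < rk v \<longrightarrow> \<phi> u \<noteq> \<phi> v)"
proof -
  define n where "n = Suc (Max (insert 0 (rk ` V)))"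
  have "\<And>v. v \<in> V \<Longrightarrow> rk v < n"
  proof -
    fix v assume "v \<in> V"
    then have "rk v \<le> Max (insert 0 (rk ` V))" using assms(1) by (intro Max_ge) auto
    then show "rk v < n" unfolding n_def by simp
  qed
  then have eq: "{v\<in>V. rk v < n} = V" by blast
  show ?thesis using greedy_aux[OF assms, of n] unfolding eq .
qed



definition ES :: "('a\<Rightarrow>'a\<Rightarrow>bool) \<Rightarrow> ('a\<Rightarrow>nat) \<Rightarrow> 'a set \<Rightarrow> 'a \<Rightarrow> 'a set" where
  "ES E rk S v = {u\<in>S. E u v \<and> rk u < rk v}"

definition Inv :: "'a set \<Rightarrow> ('a\<Rightarrow>'a\<Rightarrow>bool) \<Rightarrow> 'a \<Rightarrow> 'a set \<Rightarrow> ('a\<Rightarrow>nat) \<Rightarrow> bool" where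
  "Inv V E r S rk \<longleftrightarrow> S \<subseteq> V \<and> r \<in> S \<and> inj_on rk S \<and> (\<forall>v\<in>S. rk v < card S) \<and> rk r = 0
    \<and> (\<forall>v\<in>S. v \<noteq> r \<longrightarrow> ES E rk S v \<noteq> {})
    \<and> (\<forall>v\<in>S. \<forall>p. ES E rk S v = {p} \<longrightarrow> (\<forall>x\<in>S. E p x \<and> rk v < rk x \<longrightarrow> ES E rk S x = {p}))
    \<and> (\<forall>v\<in>S. \<forall>p. ES E rk S v = {p} \<longrightarrow> (\<forall>y\<in>V-S. E p y \<longrightarrow> {u\<in>S. E u y} = {p}))
    \<and> (\<forall>v\<in>S. \<forall>p. ES E rk S v = {p} \<longrightarrow> (\<forall>m\<in>S. rk m < rk p \<longrightarrow> (\<forall>y\<in>V-S. \<not> E m y)))"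

lemma step:
  assumes G: "graph V E" and gi: "girth_at_least V E 5" and I: "Inv V E r S rk"
    and ex: "\<exists>m\<in>S. \<exists>y\<in>V-S. E m y"
  shows "\<exists>S' rk'. Inv V E r S' rk' \<and> card S' = Suc (card S)"
proof -
  have sym: "\<And>a b. E a b \<Longrightarrow> E b a" and inV: "\<And>a b. E a b \<Longrightarrow> a \<in> V \<and> b \<in> V"
    and irr: "\<And>a. \<not> E a a" and finV: "finite V"
    using G unfolding graph_def by metis+
  have SV: "S \<subseteq> V" and rS: "r \<in> S" and inj: "inj_on rk S" and rkS: "\<forall>v\<in>S. rk v < card S"
    and rk0: "rk r = 0"
    and Ib: "\<forall>v\<in>S. v \<noteq> r \<longrightarrow> ES E rk S v \<noteq> {}"
    and IP: "\<forall>v\<in>S. \<forall>p. ES E rk S v = {p} \<longrightarrow> (\<forall>x\<in>S. E p x \<and> rk v < rk x \<longrightarrow> ES E rk S x = {p})"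
    and IJ: "\<forall>v\<in>S. \<forall>p. ES E rk S v = {p} \<longrightarrow> (\<forall>y\<in>V-S. E p y \<longrightarrow> {u\<in>S. E u y} = {p})"
    and IK: "\<forall>v\<in>S. \<forall>p. ES E rk S v = {p} \<longrightarrow> (\<forall>m\<in>S. rk m < rk p \<longrightarrow> (\<forall>y\<in>V-S. \<not> E m y))"
    using I unfolding Inv_def by - (elim conjE, assumption)+
  have finS: "finite S" using SV finV finite_subset by blast
  let ?C = "\<lambda>m. m \<in> S \<and> (\<exists>y\<in>V-S. E m y)"
  obtain m0 where "?C m0" using ex by blast
  then obtain p where pC: "?C p" and pmin: "\<And>m. ?C m \<Longrightarrow> rk p \<le> rk m"
    using ex_has_least_nat[of ?C m0 rk] by blast
  have pS: "p \<in> S" using pC by blast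
  have pmin': "\<And>m y. m \<in> S \<Longrightarrow> rk m < rk p \<Longrightarrow> y \<in> V - S \<Longrightarrow> \<not> E m y"
    using pmin by (meson not_le)
  obtain y where yV: "y \<in> V - S" and py: "E p y"
    and ych: "{u\<in>S. E u y} = {p} \<longrightarrow> (\<forall>y''\<in>V-S. E p y'' \<longrightarrow> {u\<in>S. E u y''} = {p})"
  proof (cases "\<exists>y\<in>V-S. E p y \<and> {u\<in>S. E u y} \<noteq> {p}")
    case True then show ?thesis using that by blast
  next
    case False then show ?thesis using that pC by blast
  qed
  define S' where "S' = insert y S"
  define rk' where "rk' = rk(y := card S)"
  have yS: "y \<notin> S" using yV by blast
  have cardS': "card S' = Suc (card S)" using finS yS by (simp add: S'_def)
  have rk'S: "\<And>v. v \<in> S \<Longrightarrow> rk' v = rk v" using yS by (auto simp: rk'_def)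
  have ESold: "\<And>v. v \<in> S \<Longrightarrow> ES E rk' S' v = ES E rk S v"
    using rkS rk'S yS by (auto simp: ES_def S'_def rk'_def)
  have ESy: "ES E rk' S' y = {u\<in>S. E u y}"
    using rkS rk'S yS by (auto simp: ES_def S'_def rk'_def)
  have tri: "\<And>a b c. E a b \<Longrightarrow> E b c \<Longrightarrow> E c a \<Longrightarrow> False"
  proof -
    fix a b c assume h: "E a b" "E b c" "E c a"
    have "a \<noteq> b" "b \<noteq> c" "a \<noteq> c" using h irr by metis+
    then show False using no_tri[OF gi _ _ _ h] inV h by blast
  qed
  have qp: "\<And>v q y'. v \<in> S \<Longrightarrow> ES E rk S v = {q} \<Longrightarrow> y' \<in> V - S \<Longrightarrow> E q y' \<Longrightarrow> q = p"
  proof -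
    fix v q y' assume h: "v \<in> S" "ES E rk S v = {q}" "y' \<in> V - S" "E q y'"
    have qS: "q \<in> S" using h(2) unfolding ES_def by blast
    have "rk p \<le> rk q" using pmin qS h by blast
    moreover have "\<not> rk p < rk q" using IK[rule_format, OF h(1) h(2) pS] pC by blast
    ultimately have "rk p = rk q" by simp
    then show "q = p" using inj_onD[OF inj _ qS pS] by simp
  qed
  have Ny: "{u\<in>S. E u y} = {p} \<longrightarrow> (\<forall>y''\<in>V-S'. E p y'' \<longrightarrow> {u\<in>S'. E u y''} = {p})"
  proof (intro impI ballI)
    fix y'' assume a: "{u\<in>S. E u y} = {p}" and b: "y'' \<in> V - S'" "E p y''"
    have "{u\<in>S. E u y''} = {p}" using ych a b by (auto simp: S'_def)
    moreover have "\<not> E y y''" using tri py b(2) sym by blast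
    ultimately show "{u\<in>S'. E u y''} = {p}" using b by (auto simp: S'_def)
  qed
  have Inew: "Inv V E r S' rk'"
    unfolding Inv_def
  proof (intro conjI)
    show "S' \<subseteq> V" using SV yV by (auto simp: S'_def)
    show "r \<in> S'" using rS by (auto simp: S'_def)
    show "inj_on rk' S'"
    proof -
      have "rk' y \<notin> rk' ` S" using rkS rk'S by (auto simp: rk'_def)
      moreover have "inj_on rk' S" using inj rk'S by (simp add: inj_on_def)
      ultimately show ?thesis using yS by (simp add: S'_def)
    qed
    show "\<forall>v\<in>S'. rk' v < card S'" using rkS cardS' by (auto simp: S'_def rk'_def)
    show "rk' r = 0" using rk0 rS yS by (auto simp: rk'_def)
    show "\<forall>v\<in>S'. v \<noteq> r \<longrightarrow> ES E rk' S' v \<noteq> {}"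
      using Ib ESold ESy py pS by (auto simp: S'_def)
    show "\<forall>v\<in>S'. \<forall>q. ES E rk' S' v = {q} \<longrightarrow> (\<forall>x\<in>S'. E q x \<and> rk' v < rk' x \<longrightarrow> ES E rk' S' x = {q})"
    proof (intro ballI allI impI)
      fix v q x assume v: "v \<in> S'" and e: "ES E rk' S' v = {q}" and x: "x \<in> S'"
        and h: "E q x \<and> rk' v < rk' x"
      show "ES E rk' S' x = {q}"
      proof (cases "v = y")
        case True
        then have False using h x rkS rk'S by (auto simp: S'_def rk'_def)
        then show ?thesis ..
      next
        case False
        then have vS: "v \<in> S" using v by (auto simp: S'_def)
        then have e': "ES E rk S v = {q}" using e ESold by simp
        show ?thesis
        proof (cases "x = y")
          case True
          then show ?thesis using IJ[rule_format, OF vS e' yV] h ESy by simp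
        next
          case False
          then have xS: "x \<in> S" using x by (auto simp: S'_def)
          then have "rk v < rk x" using h rk'S vS by simp
          then have "ES E rk S x = {q}" using IP[rule_format, OF vS e' xS] h by blast
          then show ?thesis using ESold xS by simp
        qed
      qed
    qed
    show "\<forall>v\<in>S'. \<forall>q. ES E rk' S' v = {q} \<longrightarrow> (\<forall>y'\<in>V-S'. E q y' \<longrightarrow> {u\<in>S'. E u y'} = {q})"
    proof (intro ballI allI impI)
      fix v q y' assume v: "v \<in> S'" and e: "ES E rk' S' v = {q}" and y': "y' \<in> V - S'"
        and h: "E q y'"
      show "{u\<in>S'. E u y'} = {q}"
      proof (cases "v = y")
        case True
        then have eq: "{u\<in>S. E u y} = {q}" using e ESy by simp
        have "p \<in> {u\<in>S. E u y}" using py pS by simp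
        then have qp1: "q = p" using eq by simp
        then have eqp: "{u\<in>S. E u y} = {p}" using eq by simp
        show ?thesis using Ny[rule_format, OF eqp y'] h qp1 by simp
      next
        case False
        then have vS: "v \<in> S" using v by (simp add: S'_def)
        then have e': "ES E rk S v = {q}" using e ESold by simp
        have y'S: "y' \<in> V - S" using y' by (simp add: S'_def)
        have qp': "q = p" using qp[OF vS e' y'S h] .
        have old: "{u\<in>S. E u y'} = {q}" using IJ[rule_format, OF vS e' y'S h] .
        have "E y' q" using sym[OF h] .
        then have "E y' p" unfolding qp' .
        then have nE: "\<not> E y y'" using tri[OF py] by blast
        have "{u\<in>S'. E u y'} = {u\<in>S. E u y'}" using nE unfolding S'_def by blast
        then show ?thesis using old by simp
      qed
    qed
    show "\<forall>v\<in>S'. \<forall>q. ES E rk' S' v = {q} \<longrightarrow> (\<forall>m\<in>S'. rk' m < rk' q \<longrightarrow> (\<forall>y'\<in>V-S'. \<not> E m y'))"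
    proof (intro ballI allI impI)
      fix v q m y' assume v: "v \<in> S'" and e: "ES E rk' S' v = {q}" and m: "m \<in> S'"
        and h: "rk' m < rk' q" and y': "y' \<in> V - S'"
      have y'S: "y' \<in> V - S" using y' by (auto simp: S'_def)
      have qS: "q \<in> S"
      proof (cases "v = y")
        case True then show ?thesis using e ESy by auto
      next
        case False then show ?thesis using e ESold v unfolding ES_def S'_def by auto
      qed
      have mS: "m \<in> S" using m h qS rkS rk'S by (auto simp: S'_def rk'_def)
      have h': "rk m < rk q" using h rk'S mS qS by simp
      show "\<not> E m y'"
      proof (cases "v = y")
        case True
        then have eq: "{u\<in>S. E u y} = {q}" using e ESy by simp
        have "p \<in> {u\<in>S. E u y}" using py pS by simp
        then have "q = p" using eq by simp
        then show ?thesis using pmin'[OF mS _ y'S] h' by simp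
      next
        case False
        then have vS: "v \<in> S" using v by (auto simp: S'_def)
        then have e': "ES E rk S v = {q}" using e ESold by simp
        show ?thesis using IK[rule_format, OF vS e' mS h' y'S] .
      qed
    qed
  qed
  then show ?thesis using cardS' by blast
qed



lemma cross:
  assumes "E\<^sup>*\<^sup>* a b" "a \<in> S" "b \<notin> S"
  shows "\<exists>u\<in>S. \<exists>v. v \<notin> S \<and> E u v"
  using assms
proof (induction rule: rtranclp_induct)
  case base then show ?case by simp
next
  case (step c d)
  show ?case
  proof (cases "c \<in> S")
    case True then show ?thesis using step by blast
  next
    case False then show ?thesis using step by blast
  qed
qed

lemma build:
  assumes G: "graph V E" and C: "connected_graph V E" and gi: "girth_at_least V E 5"
    and rV: "r \<in> V"
  shows "k \<ge> 1 \<Longrightarrow> k \<le> card V \<Longrightarrow> \<exists>S rk. Inv V E r S rk \<and> card S = k"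
proof (induction k)
  case 0 then show ?case by simp
next
  case (Suc k)
  show ?case
  proof (cases "k = 0")
    case True
    have "Inv V E r {r} (\<lambda>_. 0)" using rV unfolding Inv_def ES_def by simp
    moreover have "card {r} = Suc k" using True by simp
    ultimately show ?thesis by blast
  next
    case False
    have "\<exists>S rk. Inv V E r S rk \<and> card S = k" using Suc.IH Suc.prems False by simp
    then obtain S rk where I: "Inv V E r S rk" and cS: "card S = k" by blast
    have SV: "S \<subseteq> V" using I by (simp add: Inv_def)
    have rS: "r \<in> S" using I by (simp add: Inv_def)
    have finV: "finite V" using G unfolding graph_def by blast
    have "S \<noteq> V" using cS Suc.prems by auto
    then obtain w where w: "w \<in> V" "w \<notin> S" using SV by blast
    have "E\<^sup>*\<^sup>* r w" using C rV w(1) unfolding connected_graph_def by blast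
    then obtain u v where uv: "u \<in> S" "v \<notin> S" "E u v" using cross[of E r w S] rS w(2) by blast
    have "v \<in> V" using uv(3) G unfolding graph_def by blast
    then have ex: "\<exists>m\<in>S. \<exists>y\<in>V-S. E m y" using uv by blast
    show ?thesis using step[OF G gi I ex] cS by auto
  qed
qed



lemma full_order:
  assumes G: "graph V E" and C: "connected_graph V E" and gi: "girth_at_least V E 5"
    and rV: "r \<in> V"
  shows "\<exists>rk. Inv V E r V rk"
proof -
  have finV: "finite V" using G unfolding graph_def by blast
  have "card V \<ge> 1" using rV finV by (metis One_nat_def Suc_leI card_gt_0_iff empty_iff)
  then obtain S rk where I: "Inv V E r S rk" and cS: "card S = card V"
    using build[OF G C gi rV] by blast
  have SV: "S \<subseteq> V" using I by (simp add: Inv_def)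
  have "S = V" using card_subset_eq[OF finV SV cS] .
  then show ?thesis using I by blast
qed

lemma ci: "finite A \<Longrightarrow> card (insert x A) \<le> Suc (card A)"
  by (simp add: card_insert_if)

theorem main:
  fixes V :: "'a set" and E :: "'a \<Rightarrow> 'a \<Rightarrow> bool" and L :: "'a \<Rightarrow> 'c set"
  assumes G: "graph V E"
    and C: "connected_graph V E"
    and gi: "girth_at_least V E 5"
    and Lc: "\<forall>v\<in>V. card (L v) \<ge> max_degree V E + 2"
  shows "\<exists>\<phi> :: 'a \<Rightarrow> 'c. (\<forall>v\<in>V. \<phi> v \<in> L v) \<and> proper_coloring V E \<phi> \<and> distinguishing V E \<phi>"
proof -
  have sym: "\<And>a b. E a b \<Longrightarrow> E b a" and inV: "\<And>a b. E a b \<Longrightarrow> a \<in> V \<and> b \<in> V"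
    and irr: "\<And>a. \<not> E a a" and finV: "finite V"
    using G unfolding graph_def by metis+
  obtain r where rV: "r \<in> V" using C unfolding connected_graph_def by blast
  obtain rk where I: "Inv V E r V rk" using full_order[OF G C gi rV] by blast
  have inj: "inj_on rk V" and rk0: "rk r = 0"
    and Ib0: "\<forall>v\<in>V. v \<noteq> r \<longrightarrow> ES E rk V v \<noteq> {}"
    and IP0: "\<forall>v\<in>V. \<forall>p. ES E rk V v = {p} \<longrightarrow> (\<forall>x\<in>V. E p x \<and> rk v < rk x \<longrightarrow> ES E rk V x = {p})"
    using I unfolding Inv_def by - (elim conjE, assumption)+
  have Ib: "\<And>v. v \<in> V \<Longrightarrow> v \<noteq> r \<Longrightarrow> ES E rk V v \<noteq> {}" using Ib0 by blast
  have IP: "\<And>v p x. v \<in> V \<Longrightarrow> ES E rk V v = {p} \<Longrightarrow> x \<in> V \<Longrightarrow> E p x \<Longrightarrow> rk v < rk x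
      \<Longrightarrow> ES E rk V x = {p}"
  proof -
    fix v p x assume h: "v \<in> V" "ES E rk V v = {p}" "x \<in> V" "E p x" "rk v < rk x"
    show "ES E rk V x = {p}" using IP0[rule_format, OF h(1) h(2) h(3)] h(4,5) by blast
  qed
  define D where "D = max_degree V E"
  define N where "N = (\<lambda>v. {u. E v u})"
  have NV: "\<And>v. N v \<subseteq> V" using inV by (auto simp: N_def)
  have finN: "\<And>v. finite (N v)" using NV finV finite_subset by blast
  have degD: "\<And>v. v \<in> V \<Longrightarrow> card (N v) \<le> D"
  proof -
    fix v assume "v \<in> V"
    then have "degree E v \<le> Max (degree E ` V)" using finV by (intro Max_ge) auto
    then show "card (N v) \<le> D" by (simp add: D_def max_degree_def degree_def N_def)
  qed
  have ESsub: "\<And>v. ES E rk V v \<subseteq> N v" using sym by (auto simp: ES_def N_def)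
  have ESrk: "\<And>u v. u \<in> ES E rk V v \<Longrightarrow> rk u < rk v \<and> E u v \<and> u \<in> V" by (simp add: ES_def)
  have rkpos: "\<And>v. v \<in> V \<Longrightarrow> v \<noteq> r \<Longrightarrow> rk r < rk v"
  proof -
    fix v assume v: "v \<in> V" "v \<noteq> r"
    have "rk v \<noteq> rk r" using inj_onD[OF inj _ v(1) rV] v(2) by blast
    then show "rk r < rk v" using rk0 by simp
  qed
  define H where "H = (\<lambda>a b. a \<noteq> b \<and> (E a b \<or> a = r \<or> b = r
      \<or> (\<exists>p. ES E rk V a = {p} \<and> ES E rk V b = {p})))"
  have Hsym: "\<And>a b. H a b \<Longrightarrow> H b a" unfolding H_def using sym by blast
  have bound: "card {u\<in>V. H u v \<and> rk u < rk v} \<le> Suc D" if vV: "v \<in> V" for v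
  proof -
    let ?F = "{u\<in>V. H u v \<and> rk u < rk v}"
    show ?thesis
    proof (cases "v = r")
      case True
      then have e0: "?F = {}" using rk0 by auto
      show ?thesis unfolding e0 by simp
    next
      case vr: False
      show ?thesis
      proof (cases "\<exists>q. ES E rk V v = {q}")
        case False
        have sub: "?F \<subseteq> insert r (ES E rk V v)"
        proof
          fix u assume u: "u \<in> ?F"
          then have h: "H u v" "rk u < rk v" "u \<in> V" by auto
          have "E u v \<or> u = r" using h(1) False vr unfolding H_def by blast
          then show "u \<in> insert r (ES E rk V v)"
            using h by (auto simp: ES_def)
        qed
        have finES: "finite (ES E rk V v)" using finN ESsub finite_subset by blast
        have "card ?F \<le> card (insert r (ES E rk V v))"
          using card_mono[OF _ sub] finES by simp
        also have "\<dots> \<le> Suc (card (ES E rk V v))" using ci[OF finES] .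
        also have "\<dots> \<le> Suc (card (N v))" using card_mono[OF finN ESsub] by simp
        also have "\<dots> \<le> Suc D" using degD vV by simp
        finally show ?thesis .
      next
        case True
        then obtain q where q: "ES E rk V v = {q}" by blast
        have qv: "rk q < rk v" "E q v" "q \<in> V" using ESrk[of q v] q by auto
        have vN: "v \<in> N q" using qv by (simp add: N_def)
        show ?thesis
        proof (cases "q = r")
          case qr: True
          have sub: "?F \<subseteq> insert r (N q - {v})"
          proof
            fix u assume u: "u \<in> ?F"
            then have h: "H u v" "rk u < rk v" "u \<in> V" by auto
            show "u \<in> insert r (N q - {v})"
            proof (cases "E u v")
              case True
              then have "u \<in> ES E rk V v" using h by (simp add: ES_def)
              then show ?thesis using q qr by simp
            next
              case nE: False
              show ?thesis
              proof (cases "u = r")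
                case True then show ?thesis by simp
              next
                case ur: False
                then have "ES E rk V u = {q}" "u \<noteq> v" using h nE vr q unfolding H_def by auto
                then have "q \<in> ES E rk V u" by simp
                then have "E q u" using ESrk by auto
                then have "u \<in> N q" by (simp add: N_def)
                then show ?thesis using \<open>u \<noteq> v\<close> by simp
              qed
            qed
          qed
          have fD: "finite (N q - {v})" using finN by simp
          have "card ?F \<le> card (insert r (N q - {v}))"
            using card_mono[OF _ sub] fD by simp
          also have "\<dots> \<le> Suc (card (N q - {v}))" using ci[OF fD] .
          also have "\<dots> = card (N q)"
          proof -
            have "card (N q - {v}) = card (N q) - 1" using card_Diff_singleton[OF vN] .
            moreover have "card (N q) > 0" using vN finN card_gt_0_iff by blast
            ultimately show ?thesis by simp
          qed
          also have "\<dots> \<le> Suc D" using degD[OF qv(3)] by simp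
          finally show ?thesis .
        next
          case False
          then obtain q0 where q0: "q0 \<in> ES E rk V q" using Ib qv by blast
          have q0r: "rk q0 < rk q" "E q0 q" using ESrk[OF q0] by auto
          have q0N: "q0 \<in> N q" using q0r sym by (simp add: N_def)
          have sub: "?F \<subseteq> insert r (insert q (N q - {v, q0}))"
          proof
            fix u assume u: "u \<in> ?F"
            then have h: "H u v" "rk u < rk v" "u \<in> V" by auto
            show "u \<in> insert r (insert q (N q - {v, q0}))"
            proof (cases "E u v")
              case True
              then have "u \<in> ES E rk V v" using h by (simp add: ES_def)
              then show ?thesis using q by simp
            next
              case nE: False
              show ?thesis
              proof (cases "u = r")
                case True then show ?thesis by simp
              next
                case ur: False
                then have "ES E rk V u = {q}" "u \<noteq> v" using h nE vr q unfolding H_def by auto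
                then have "q \<in> ES E rk V u" by simp
                then have "rk q < rk u" "E q u" using ESrk by auto
                then have "u \<in> N q" "u \<noteq> q0" using q0r by (auto simp: N_def)
                then show ?thesis using \<open>u \<noteq> v\<close> by simp
              qed
            qed
          qed
          have fD: "finite (N q - {v, q0})" using finN by simp
          have "card ?F \<le> card (insert r (insert q (N q - {v, q0})))"
            using card_mono[OF _ sub] fD by simp
          also have "\<dots> \<le> Suc (Suc (card (N q - {v, q0})))"
          proof -
            have "card (insert q (N q - {v, q0})) \<le> Suc (card (N q - {v, q0}))" using ci[OF fD] .
            moreover have "card (insert r (insert q (N q - {v, q0}))) \<le> Suc (card (insert q (N q - {v, q0})))"
              using ci[of "insert q (N q - {v, q0})" r] fD by simp
            ultimately show ?thesis by simp
          qed
          also have "card (N q - {v, q0}) = card (N q) - 2"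
          proof -
            have "v \<noteq> q0" using q0r qv by auto
            then have "card {v, q0} = 2" by simp
            moreover have "{v, q0} \<subseteq> N q" using vN q0N by simp
            moreover have "finite {v, q0}" by simp
            ultimately show ?thesis using card_Diff_subset by metis
          qed
          also have "Suc (Suc (card (N q) - 2)) \<le> Suc D"
          proof -
            have "{v, q0} \<subseteq> N q" using vN q0N by simp
            then have "card {v, q0} \<le> card (N q)" using card_mono[OF finN[of q]] by blast
            moreover have "v \<noteq> q0" using q0r qv by auto
            ultimately have "2 \<le> card (N q)" by simp
            then show ?thesis using degD[OF qv(3)] by simp
          qed
          finally show ?thesis .
        qed
      qed
    qed
  qed
  have B: "\<forall>v\<in>V. finite (L v) \<and> card {u\<in>V. H u v \<and> rk u < rk v} < card (L v)"
  proof
    fix v assume v: "v \<in> V"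
    have c: "card (L v) \<ge> D + 2" using Lc v by (simp add: D_def)
    then have "card (L v) > 0" by simp
    then have "finite (L v)" using card_gt_0_iff by blast
    then show "finite (L v) \<and> card {u\<in>V. H u v \<and> rk u < rk v} < card (L v)"
      using bound[OF v] c by simp
  qed
  obtain \<phi> :: "'a \<Rightarrow> 'c" where phL: "\<forall>v\<in>V. \<phi> v \<in> L v"
    and phH: "\<forall>u\<in>V. \<forall>v\<in>V. H u v \<and> rk u < rk v \<longrightarrow> \<phi> u \<noteq> \<phi> v"
    using greedy[OF finV inj B] by blast
  have phH': "\<phi> u \<noteq> \<phi> v" if "u \<in> V" "v \<in> V" "H u v" for u v
  proof -
    have "u \<noteq> v" using that(3) by (simp add: H_def)
    then have "rk u \<noteq> rk v" using inj_onD[OF inj _ that(1) that(2)] by blast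
    then consider "rk u < rk v" | "rk v < rk u" by linarith
    then show ?thesis
    proof cases
      case 1 then show ?thesis using phH that by blast
    next
      case 2 then have "\<phi> v \<noteq> \<phi> u" using phH that Hsym by blast
      then show ?thesis by simp
    qed
  qed
  have proper: "proper_coloring V E \<phi>"
    unfolding proper_coloring_def
  proof (intro ballI impI)
    fix u v assume "u \<in> V" "v \<in> V" "E u v"
    moreover have "u \<noteq> v" using \<open>E u v\<close> irr by metis
    ultimately show "\<phi> u \<noteq> \<phi> v" using phH' by (simp add: H_def)
  qed
  have dist: "distinguishing V E \<phi>"
    unfolding distinguishing_def
  proof (intro allI impI)
    fix f assume a: "automorphism V E f \<and> (\<forall>v\<in>V. \<phi> (f v) = \<phi> v)"
    then have bij: "bij_betw f V V" and adj: "\<And>u v. u \<in> V \<Longrightarrow> v \<in> V \<Longrightarrow> E u v \<longleftrightarrow> E (f u) (f v)"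
      and col: "\<And>v. v \<in> V \<Longrightarrow> \<phi> (f v) = \<phi> v"
      unfolding automorphism_def by auto
    have fV: "\<And>v. v \<in> V \<Longrightarrow> f v \<in> V" using bij bij_betwE by blast
    have finj: "inj_on f V" using bij bij_betw_imp_inj_on by blast
    have "\<forall>v\<in>V. rk v = n \<longrightarrow> f v = v" for n
    proof (induction n rule: less_induct)
      case (less n)
      show ?case
      proof (intro ballI impI)
        fix v assume vV: "v \<in> V" and vn: "rk v = n"
        have IH: "\<And>u. u \<in> V \<Longrightarrow> rk u < rk v \<Longrightarrow> f u = u" using less vn by blast
        show "f v = v"
        proof (rule ccontr)
          assume ne: "f v \<noteq> v"
          have fvV: "f v \<in> V" using fV vV .
          have cc: "\<phi> (f v) = \<phi> v" using col vV .
          show False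
          proof (cases "v = r")
            case True
            then have "H (f v) v" using ne by (simp add: H_def)
            then show False using phH'[OF fvV vV] cc by blast
          next
            case vr: False
            show False
            proof (cases "\<exists>p. ES E rk V v = {p}")
              case True
              then obtain p where p: "ES E rk V v = {p}" by blast
              have pv: "rk p < rk v" "E p v" "p \<in> V" using ESrk[of p v] p by auto
              have fp: "f p = p" using IH pv by blast
              have pfv: "E p (f v)" using adj[OF pv(3) vV] pv(2) fp by simp
              consider "rk (f v) < rk v" | "rk (f v) = rk v" | "rk v < rk (f v)" by linarith
              then show False
              proof cases
                case 1
                then have "f (f v) = f v" using IH fvV by blast
                then have "f v = v" using inj_onD[OF finj _ fvV vV] by blast
                then show False using ne by blast
              next
                case 2
                then have "f v = v" using inj_onD[OF inj _ fvV vV] by blast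
                then show False using ne by blast
              next
                case 3
                have "ES E rk V (f v) = {p}" using IP[OF vV p fvV pfv 3] .
                then have "H v (f v)" using p ne by (auto simp: H_def)
                then show False using phH'[OF vV fvV] cc by simp
              qed
            next
              case False
              obtain a where a: "a \<in> ES E rk V v" using Ib[OF vV vr] by blast
              have "ES E rk V v \<noteq> {a}" using False by blast
              then obtain b where b: "b \<in> ES E rk V v" "b \<noteq> a" using a by blast
              have av: "rk a < rk v" "E a v" "a \<in> V" using ESrk[OF a] by auto
              have bv: "rk b < rk v" "E b v" "b \<in> V" using ESrk[OF b(1)] by auto
              have fa: "f a = a" using IH av by blast
              have fb: "f b = b" using IH bv by blast
              have afv: "E a (f v)" using adj[OF av(3) vV] av(2) fa by simp
              have bfv: "E b (f v)" using adj[OF bv(3) vV] bv(2) fb by simp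
              have "a \<noteq> v" using av(2) irr by metis
              moreover have "b \<noteq> v" using bv(2) irr by metis
              moreover have "a \<noteq> f v" using afv irr by metis
              moreover have "b \<noteq> f v" using bfv irr by metis
              ultimately have "distinct [a, v, b, f v]" using b(2) ne by auto
              then show False
                using no_sq[OF gi av(3) vV bv(3) fvV av(2) sym[OF bv(2)] bfv sym[OF afv]] by blast
            qed
          qed
        qed
      qed
    qed
    then show "\<forall>v\<in>V. f v = v" by blast
  qed
  show ?thesis using phL proper dist by blast
qed


theorem proposition5:
  fixes V :: "'a set" and E :: "'a \<Rightarrow> 'a \<Rightarrow> bool" and L :: "'a \<Rightarrow> 'c set"
  assumes "graph V E"
    and "connected_graph V E"
    and "girth_at_least V E 5"
    and "\<forall>v\<in>V. card (L v) \<ge> max_degree V E + 2"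
  shows "\<exists>\<phi> :: 'a \<Rightarrow> 'c. (\<forall>v\<in>V. \<phi> v \<in> L v) \<and> proper_coloring V E \<phi> \<and> distinguishing V E \<phi>"
  using main[OF assms] .

end
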